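(* Let $X\in\mathbb{R}^{m\times n}$, $\mathbf y,\mathbf z\in\mathbb{R}^m$ and $\gamma>0$, and let $A,B,C$ be the symmetric $(n+2)\times(n+2)$ matrices defined in the context. Then the optimal value of the problem $$\inf_{\mathbf w\in\mathbb{R}^n}\ \frac{\left\|\frac{1}{\gamma}\mathbf z\,\mathbf w^T\mathbf w+X\mathbf w-\mathbf y-\frac{1}{\gamma}(\mathbf w^T\mathbf w)\,\mathbf y\right\|^2}{\left(1+\frac{1}{\gamma}\mathbf w^T\mathbf w\right)^2}$$ is equal to the optimal value of the semidefinite program $$\sup_{\mu\in\mathbb{R},\,\lambda\in\mathbb{R}}\ \mu\quad\text{s.t.}\quad A-\mu B+\lambda C\succeq 0 .$$
   Context: Notation: $\|\cdot\|$ is the Euclidean norm, $I_n$ the $n\times n$ identity, $\mathbf 0_n$ the $n\times n$ zero matrix, $M\succeq 0$ means $M$ is symmetric positive semidefinite. Define, in block form with blocks of sizes $n,1,1$, $$A=\begin{pmatrix} X^TX & X^T(\mathbf z-\mathbf y) & -X^T\mathbf y\\ (\mathbf z-\mathbf y)^TX & \|\mathbf z-\mathbf y\|^2 & -(\mathbf z-\mathbf y)^T\mathbf y\\ -\mathbf y^TX & -\mathbf y^T(\mathbf z-\mathbf y) & \mathbf y^T\mathbf y\end{pmatrix},\quad B=\begin{pmatrix}\mathbf 0_n&0&0\\0&1&1\\0&1&1\end{pmatrix},\quad C=\begin{pmatrix}\frac1\gamma I_n&0&0\\0&0&-\frac12\\0&-\frac12&0\end{pmatrix}.$$ *)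

theory Defs
  imports "HOL-Analysis.Analysis" "HOL-Library.Extended_Real"
begin

text \<open>Index type for (n+2)x(n+2) block matrices: Inl i (i in the n-block),
  Inr (Inl ()) the first extra index, Inr (Inr ()) the second extra index.\<close>
type_synonym ('n) ext2 = "'n + (unit + unit)"

definition psd :: "real ^ 'k ^ 'k \<Rightarrow> bool" where
  "psd M \<longleftrightarrow> transpose M = M \<and> (\<forall>x. 0 \<le> x \<bullet> (M *v x))"

definition matA :: "real ^ 'n ^ 'm \<Rightarrow> real ^ 'm \<Rightarrow> real ^ 'm \<Rightarrow> real ^ ('n ext2) ^ ('n ext2)" where
  "matA X y z = (\<chi> p q. case (p, q) of
      (Inl i, Inl j) \<Rightarrow> (transpose X ** X) $ i $ j
    | (Inl i, Inr (Inl _)) \<Rightarrow> (transpose X *v (z - y)) $ i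
    | (Inl i, Inr (Inr _)) \<Rightarrow> - (transpose X *v y) $ i
    | (Inr (Inl _), Inl j) \<Rightarrow> ((z - y) v* X) $ j
    | (Inr (Inl _), Inr (Inl _)) \<Rightarrow> (norm (z - y))^2
    | (Inr (Inl _), Inr (Inr _)) \<Rightarrow> - ((z - y) \<bullet> y)
    | (Inr (Inr _), Inl j) \<Rightarrow> - (y v* X) $ j
    | (Inr (Inr _), Inr (Inl _)) \<Rightarrow> - (y \<bullet> (z - y))
    | (Inr (Inr _), Inr (Inr _)) \<Rightarrow> y \<bullet> y)"

definition matB :: "real ^ (('n::finite) ext2) ^ ('n ext2)" where
  "matB = (\<chi> p q. case (p, q) of
      (Inr _, Inr _) \<Rightarrow> 1
    | _ \<Rightarrow> 0)"

definition matC :: "real \<Rightarrow> real ^ (('n::finite) ext2) ^ ('n ext2)" where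
  "matC \<gamma> = (\<chi> p q. case (p, q) of
      (Inl i, Inl j) \<Rightarrow> (if i = j then 1 / \<gamma> else 0)
    | (Inr (Inl _), Inr (Inr _)) \<Rightarrow> - 1 / 2
    | (Inr (Inr _), Inr (Inl _)) \<Rightarrow> - 1 / 2
    | _ \<Rightarrow> 0)"

definition objective :: "real ^ 'n ^ 'm \<Rightarrow> real ^ 'm \<Rightarrow> real ^ 'm \<Rightarrow> real \<Rightarrow> real ^ 'n \<Rightarrow> real" where
  "objective X y z \<gamma> w =
     (norm (((1 / \<gamma>) * (w \<bullet> w)) *\<^sub>R z + X *v w - y - ((1 / \<gamma>) * (w \<bullet> w)) *\<^sub>R y))^2
     / (1 + (1 / \<gamma>) * (w \<bullet> w))^2"

end

theory Submission imports Defs begin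

lemma sum_ext2:
  fixes f :: "('n::finite) ext2 \<Rightarrow> 'a::comm_monoid_add"
  shows "(\<Sum>q\<in>UNIV. f q) = (\<Sum>i\<in>UNIV. f (Inl i)) + f (Inr (Inl ())) + f (Inr (Inr ()))"
proof -
  have "(\<Sum>q\<in>UNIV. f q) = (\<Sum>q\<in>(UNIV <+> UNIV). f q)" by simp
  also have "\<dots> = (\<Sum>i\<in>UNIV. f (Inl i)) + (\<Sum>q\<in>(UNIV::(unit+unit) set). f (Inr q))"
    by (subst sum.Plus) (auto simp: o_def)
  also have "(\<Sum>q\<in>(UNIV::(unit+unit) set). f (Inr q)) = (\<Sum>q\<in>(UNIV <+> UNIV). f (Inr q))" by simp
  also have "\<dots> = f (Inr (Inl ())) + f (Inr (Inr ()))"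
    by (subst sum.Plus) (auto simp: o_def UNIV_unit)
  finally show ?thesis by (simp add: add.assoc)
qed

definition vec3 :: "real ^ 'n \<Rightarrow> real \<Rightarrow> real \<Rightarrow> real ^ (('n::finite) ext2)" where
  "vec3 w a b = (\<chi> p. case p of Inl i \<Rightarrow> w $ i | Inr (Inl _) \<Rightarrow> a | Inr (Inr _) \<Rightarrow> b)"

definition qf :: "real ^ 'k ^ 'k \<Rightarrow> real ^ 'k \<Rightarrow> real" where
  "qf M v = v \<bullet> (M *v v)"

lemma vec3_comp [simp]: "vec3 w a b $ Inl i = w $ i" "vec3 w a b $ Inr (Inl u) = a" "vec3 w a b $ Inr (Inr u) = b"
  by (simp_all add: vec3_def)

lemma qf_ext2: "qf M v = (\<Sum>i\<in>UNIV. v $ Inl i * (M *v v) $ Inl i) + v $ Inr (Inl ()) * (M *v v) $ Inr (Inl ())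
   + v $ Inr (Inr ()) * (M *v v) $ Inr (Inr ())"
  unfolding qf_def inner_vec_def by (simp add: sum_ext2)

lemma mv_ext2: "(M *v v) $ p = (\<Sum>i\<in>UNIV. M $ p $ Inl i * v $ Inl i) + M $ p $ Inr (Inl ()) * v $ Inr (Inl ())
   + M $ p $ Inr (Inr ()) * v $ Inr (Inr ())"
  unfolding matrix_vector_mult_def by (simp add: sum_ext2[where f="\<lambda>q. M$p$q * v$q"])

lemma vm_scaleR: "((c::real) *\<^sub>R x) v* A = c *\<^sub>R (x v* (A::real^'n^'m))"
  by (simp add: vector_matrix_mult_def vec_eq_iff sum_distrib_left algebra_simps)

lemma matA_vec3_Inl:
  "(matA X y z *v vec3 w a b) $ Inl i = ((X *v w + a *\<^sub>R (z - y) - b *\<^sub>R y) v* X) $ i"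
proof -
  have "(\<Sum>j\<in>UNIV. (transpose X ** X) $ i $ j * w $ j) = ((transpose X ** X) *v w) $ i"
    by (simp add: matrix_vector_mult_def)
  also have "\<dots> = ((X *v w) v* X) $ i"
    by (simp flip: matrix_vector_mul_assoc)
  finally have h: "(\<Sum>j\<in>UNIV. (transpose X ** X) $ i $ j * w $ j) = ((X *v w) v* X) $ i" .
  show ?thesis
    apply (subst mv_ext2)
    apply (simp add: matA_def h vector_matrix_left_distrib vector_matrix_mult_diff_distrib scaleR_vector_matrix_assoc)
    done
qed

lemma vm_sum: "(\<Sum>j\<in>UNIV. (u v* X) $ j * w $ j) = u \<bullet> (X *v w)"
proof -
  have "(\<Sum>j\<in>UNIV. (u v* X) $ j * w $ j) = (u v* X) \<bullet> w" by (simp only: inner_vec_def inner_real_def)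
  thus ?thesis by (simp only: dot_lmul_matrix)
qed

lemma matA_vec3_Inr1:
  "(matA X y z *v vec3 w a b) $ Inr (Inl ()) = (z - y) \<bullet> (X *v w + a *\<^sub>R (z - y) - b *\<^sub>R y)"
proof -
  have h: "(\<Sum>j\<in>UNIV. ((z - y) v* X) $ j * w $ j) = (z - y) \<bullet> (X *v w)"
    by (rule vm_sum)
  show ?thesis
    apply (subst mv_ext2)
    apply (simp add: matA_def h inner_add_right inner_diff_right power2_norm_eq_inner)
    done
qed

lemma matA_vec3_Inr2:
  "(matA X y z *v vec3 w a b) $ Inr (Inr ()) = - (y \<bullet> (X *v w + a *\<^sub>R (z - y) - b *\<^sub>R y))"
proof -
  have h: "(\<Sum>i\<in>UNIV. w $ i * (y v* X) $ i) = y \<bullet> (X *v w)"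
    using vm_sum[of y X w] by (simp add: mult.commute)
  show ?thesis
    apply (subst mv_ext2)
    apply (simp add: matA_def h inner_add_right inner_diff_right inner_commute algebra_simps sum_negf)
    done
qed

lemma qf_matA: "qf (matA X y z) (vec3 w a b) = (norm (X *v w + a *\<^sub>R (z - y) - b *\<^sub>R y))^2"
proof -
  define r where "r = X *v w + a *\<^sub>R (z - y) - b *\<^sub>R y"
  have h: "(\<Sum>i\<in>UNIV. w $ i * (r v* X) $ i) = r \<bullet> (X *v w)"
    using vm_sum[of r X w] by (simp add: mult.commute)
  have "qf (matA X y z) (vec3 w a b) = r \<bullet> (X *v w) + a * ((z - y) \<bullet> r) + b * (- (y \<bullet> r))"
    by (simp add: qf_ext2 matA_vec3_Inl matA_vec3_Inr1 matA_vec3_Inr2 h flip: r_def)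
  also have "\<dots> = r \<bullet> r"
    by (simp add: r_def inner_add_right inner_diff_right inner_add_left inner_diff_left inner_commute algebra_simps sum_negf)
  finally show ?thesis by (simp add: r_def power2_norm_eq_inner)
qed

lemma qf_matB: "qf matB (vec3 w a b) = (a + b)^2"
  by (simp add: qf_ext2 mv_ext2 matB_def power2_eq_square algebra_simps)

lemma qf_matC: "qf (matC g) (vec3 w a b) = (w \<bullet> w) / g - a * b"
proof -
  have "\<And>i. (\<Sum>j\<in>UNIV. (if i = j then 1 / g else 0) * w $ j) = w $ i / g"
  proof -
    fix i
    have "\<And>j. (if i = j then 1 / g else 0) * w $ j = (if i = j then w $ i / g else 0)" by auto
    then show "(\<Sum>j\<in>UNIV. (if i = j then 1 / g else 0) * w $ j) = w $ i / g" by simp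
  qed
  then show ?thesis
    by (simp add: qf_ext2 mv_ext2 matC_def inner_vec_def sum_divide_distrib algebra_simps)
qed

lemma key_real:
  fixes Gx Gy B Fx Fy C :: real
  assumes gx: "Gx > 0" and gy: "Gy < 0"
    and h: "\<And>r. r^2 * Gx + r * B + Gy = 0 \<Longrightarrow> 0 \<le> r^2 * Fx + r * C + Fy"
  shows "Fx * Gy \<le> Fy * Gx"
proof -
  define D where "D = B^2 - 4 * Gx * Gy"
  have "Gx * Gy < 0" using gx gy by (simp add: mult_pos_neg)
  hence D: "D > B^2" unfolding D_def by linarith
  define sq where "sq = sqrt D"
  have sq2: "sq^2 = D" proof -
    have "0 \<le> D" using D zero_le_power2[of B] by linarith
    thus ?thesis unfolding sq_def by simp
  qed
  have sqB: "sq > \<bar>B\<bar>" unfolding sq_def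
    using D real_less_rsqrt by (simp add: abs_le_square_iff real_sqrt_abs[symmetric]
       del: real_sqrt_abs)
  define r1 where "r1 = (- B + sq) / (2 * Gx)"
  define r2 where "r2 = (- B - sq) / (2 * Gx)"
  have r1p: "r1 > 0" unfolding r1_def using sqB gx by (simp add: divide_pos_pos) 
  have r2n: "r2 < 0" unfolding r2_def using sqB gx by (simp add: divide_neg_pos)
  have root1: "r1^2 * Gx + r1 * B + Gy = 0"
    unfolding r1_def using gx sq2 unfolding D_def by (simp add: field_simps power2_eq_square) algebra
  have root2: "r2^2 * Gx + r2 * B + Gy = 0"
    unfolding r2_def using gx sq2 unfolding D_def by (simp add: field_simps power2_eq_square) algebra
  have prod: "r1 * r2 * Gx = Gy"
    unfolding r1_def r2_def using gx sq2 unfolding D_def by (simp add: field_simps power2_eq_square) algebra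
  have p1: "0 \<le> r1^2 * Fx + r1 * C + Fy" using h root1 by blast
  have p2: "0 \<le> r2^2 * Fx + r2 * C + Fy" using h root2 by blast
  have "0 \<le> r1 * (r2^2 * Fx + r2 * C + Fy) + (- r2) * (r1^2 * Fx + r1 * C + Fy)"
  proof -
    have "0 \<le> r1 * (r2^2 * Fx + r2 * C + Fy)" using p2 r1p by simp
    moreover have "0 \<le> (- r2) * (r1^2 * Fx + r1 * C + Fy)" using p1 r2n by (intro mult_nonneg_nonneg) auto
    ultimately show ?thesis by linarith
  qed
  also have "\<dots> = (r1 - r2) * (Fy - r1 * r2 * Fx)" by (simp add: algebra_simps power2_eq_square)
  finally have "0 \<le> Fy - r1 * r2 * Fx" using r1p r2n
    by (simp add: zero_le_mult_iff)
  hence "r1 * r2 * Fx * Gx \<le> Fy * Gx" using gx by (simp add: mult_right_mono)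
  thus ?thesis using prod by (simp add: algebra_simps)
qed

definition quadf :: "('a::real_vector \<Rightarrow> real) \<Rightarrow> bool" where
  "quadf F \<longleftrightarrow> (\<forall>x y s t. F (s *\<^sub>R x + t *\<^sub>R y) = s^2 * F x + s * t * (F (x + y) - F x - F y) + t^2 * F y)"

lemma S_lemma:
  fixes F G :: "'a::real_vector \<Rightarrow> real"
  assumes qF: "quadf F" and qG: "quadf G"
    and x0: "G x0 > 0" and y0: "G y0 < 0" and zero: "\<And>v. G v = 0 \<Longrightarrow> 0 \<le> F v"
  shows "\<exists>l. \<forall>v. 0 \<le> F v + l * G v"
proof -
  have key: "F x * G y \<le> F y * G x" if "G x > 0" "G y < 0" for x y
  proof (rule key_real[OF that, where B = "G (x + y) - G x - G y" and C = "F (x + y) - F x - F y"])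
    fix r assume "r^2 * G x + r * (G (x + y) - G x - G y) + G y = 0"
    hence "G (r *\<^sub>R x + 1 *\<^sub>R y) = 0" using qG[unfolded quadf_def, rule_format, of r x 1 y] by simp
    hence "0 \<le> F (r *\<^sub>R x + 1 *\<^sub>R y)" by (rule zero)
    thus "0 \<le> r^2 * F x + r * (F (x + y) - F x - F y) + F y" using qF[unfolded quadf_def, rule_format, of r x 1 y] by simp
  qed
  have ineq: "- F x / G x \<le> - F y / G y" if "G x > 0" "G y < 0" for x y
  proof -
    have "F x * G y \<le> F y * G x" by (rule key[OF that])
    thus ?thesis using that by (simp add: divide_simps)
  qed
  define S where "S = {- F x / G x | x. G x > 0}"
  have ne: "S \<noteq> {}" unfolding S_def using x0 by blast
  have bdd: "bdd_above S" unfolding S_def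
    by (rule bdd_aboveI[of _ "- F y0 / G y0"]) (use ineq[OF _ y0] in auto)
  define l where "l = Sup S"
  have "0 \<le> F v + l * G v" for v
  proof (cases "G v > 0")
    case True
    hence "- F v / G v \<le> l" unfolding l_def using bdd by (auto intro!: cSup_upper simp: S_def)
    thus ?thesis using True by (simp add: divide_simps)
  next
    case False
    show ?thesis
    proof (cases "G v = 0")
      case True thus ?thesis using zero by simp
    next
      case False2: False
      hence neg: "G v < 0" using False by simp
      have "l \<le> - F v / G v" unfolding l_def using ne
        by (rule cSup_least) (use ineq[OF _ neg] in \<open>auto simp: S_def\<close>)
      thus ?thesis using neg by (simp add: divide_simps)
    qed
  qed
  thus ?thesis by blast
qed

lemma vec3_decomp:
  fixes v :: "real^('n::finite ext2)"
  shows "v = vec3 (\<chi> i. v $ Inl i) (v $ Inr (Inl ())) (v $ Inr (Inr ()))"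
  unfolding vec_eq_iff
proof
  fix p :: "'n::finite ext2"
  show "v $ p = vec3 (\<chi> i. v $ Inl i) (v $ Inr (Inl ())) (v $ Inr (Inr ())) $ p"
    by (auto simp: vec3_def split: sum.split)
qed

lemma vec3_scale:
  fixes w :: "real^('n::finite)"
  shows "c *\<^sub>R vec3 w a b = vec3 (c *\<^sub>R w) (c * a) (c * b)"
  unfolding vec_eq_iff
proof
  fix p :: "'n::finite ext2"
  show "(c *\<^sub>R vec3 w a b) $ p = vec3 (c *\<^sub>R w) (c * a) (c * b) $ p"
    by (auto simp: vec3_def split: sum.split)
qed

lemma quadf_qf: "quadf (qf (M :: real^'k^'k))"
  unfolding quadf_def qf_def
  by (simp add: matrix_vector_right_distrib matrix_vector_mult_scaleR inner_add_left inner_add_right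
      algebra_simps power2_eq_square)

lemma qf_scale: "qf M (c *\<^sub>R v) = c^2 * qf M v"
  unfolding qf_def by (simp add: matrix_vector_mult_scaleR power2_eq_square)

lemma scaleR_mat_vec: "((c::real) *\<^sub>R (M::real^'k^'j)) *v v = c *\<^sub>R (M *v v)"
  by (simp add: vec_eq_iff matrix_vector_mult_def sum_distrib_left algebra_simps)

lemma qf_comb: "qf (A - m *\<^sub>R B + l *\<^sub>R C) v = qf A v - m * qf B v + l * qf C v"
  unfolding qf_def
  by (simp add: matrix_vector_mult_add_rdistrib matrix_vector_mult_diff_rdistrib scaleR_mat_vec
      inner_add_right inner_diff_right)

lemma sym_comb:
  fixes A B C :: "real^'k^'k"
  assumes "transpose A = A" "transpose B = B" "transpose C = C"
  shows "transpose (A - m *\<^sub>R B + l *\<^sub>R C) = A - m *\<^sub>R B + l *\<^sub>R C"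
  using assms by (simp add: vec_eq_iff transpose_def)

lemma sym_matA:
  fixes X :: "real^('n::finite)^('m::finite)"
  shows "transpose (matA X y z) = matA X y z"
  unfolding vec_eq_iff transpose_def
proof (intro allI)
  fix p q :: "'n::finite ext2"
  show "(\<chi> i j. matA X y z $ j $ i) $ p $ q = matA X y z $ p $ q"
    by (auto simp: matA_def matrix_matrix_mult_def transpose_def mult.commute inner_commute
          matrix_vector_mult_def vector_matrix_mult_def split: sum.split)
qed

lemma sym_matB: "transpose (matB :: real^('n::finite ext2)^('n ext2)) = matB"
  unfolding vec_eq_iff transpose_def
proof (intro allI)
  fix p q :: "'n::finite ext2"
  show "(\<chi> i j. (matB :: real^('n::finite ext2)^('n ext2)) $ j $ i) $ p $ q = matB $ p $ q"
    by (auto simp: matB_def split: sum.split)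
qed

lemma sym_matC: "transpose (matC g :: real^('n::finite ext2)^('n ext2)) = matC g"
  unfolding vec_eq_iff transpose_def
proof (intro allI)
  fix p q :: "'n::finite ext2"
  show "(\<chi> i j. (matC g :: real^('n::finite ext2)^('n ext2)) $ j $ i) $ p $ q = matC g $ p $ q"
    by (auto simp: matC_def split: sum.split)
qed

lemma obj_eq:
  "objective X y z g w = qf (matA X y z) (vec3 w ((1/g) * (w \<bullet> w)) 1) / (1 + (1/g) * (w \<bullet> w))^2"
proof -
  have "((1 / g) * (w \<bullet> w)) *\<^sub>R z + X *v w - y - ((1 / g) * (w \<bullet> w)) *\<^sub>R y
      = X *v w + ((1/g) * (w \<bullet> w)) *\<^sub>R (z - y) - 1 *\<^sub>R y"
    by (simp add: algebra_simps)
  then show ?thesis by (simp only: objective_def qf_matA)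
qed

lemma weak_dual:
  assumes g: "g > 0" and P: "psd (matA X y z - m *\<^sub>R matB + l *\<^sub>R matC g)"
  shows "m \<le> objective X y z g w"
proof -
  define t where "t = (1/g) * (w \<bullet> w)"
  have t0: "t \<ge> 0" unfolding t_def using g by simp
  have "0 \<le> qf (matA X y z - m *\<^sub>R matB + l *\<^sub>R matC g) (vec3 w t 1)"
    using P unfolding psd_def qf_def by blast
  also have "\<dots> = qf (matA X y z) (vec3 w t 1) - m * (t + 1)^2"
    by (simp add: qf_comb qf_matB qf_matC t_def)
  finally have "m * (1 + t)^2 \<le> qf (matA X y z) (vec3 w t 1)" by (simp add: add.commute)
  moreover have "(1 + t)^2 > 0" using t0 by simp
  moreover have "objective X y z g w = qf (matA X y z) (vec3 w t 1) / (1 + t)^2"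
    unfolding t_def by (rule obj_eq)
  ultimately show ?thesis by (simp add: pos_le_divide_eq)
qed

theorem mainTheorem1:
  fixes X :: "real ^ 'n ^ 'm" and y z :: "real ^ 'm" and \<gamma> :: real
  assumes "\<gamma> > 0"
  shows "(INF w. ereal (objective X y z \<gamma> w))
       = (SUP \<mu> \<in> {\<mu>. \<exists>l. psd (matA X y z - \<mu> *\<^sub>R matB + l *\<^sub>R matC \<gamma>)}. ereal \<mu>)"
proof -
  note g = assms
  let ?obj = "objective X y z \<gamma>"
  let ?A = "matA X y z" and ?B = "matB :: real^('n ext2)^('n ext2)" and ?C = "matC \<gamma> :: real^('n ext2)^('n ext2)"
  define m where "m = Inf (range ?obj)"
  have obj0: "0 \<le> ?obj w" for w unfolding objective_def by simp
  have bdd: "bdd_below (range ?obj)" using obj0 by (intro bdd_belowI[of _ 0]) auto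
  have mle: "m \<le> ?obj w" for w unfolding m_def using bdd by (intro cInf_lower) auto
  define F where "F = qf (?A - m *\<^sub>R ?B)"
  define G where "G = qf ?C"
  have Fvec: "F (vec3 w a b) = (norm (X *v w + a *\<^sub>R (z - y) - b *\<^sub>R y))^2 - m * (a + b)^2" for w a b
    using qf_comb[of ?A m ?B 0 ?C] by (simp add: F_def qf_matA qf_matB)
  have Gvec: "G (vec3 w a b) = (w \<bullet> w) / \<gamma> - a * b" for w a b
    by (simp add: G_def qf_matC)
  have step1: "0 \<le> F (vec3 w ((1/\<gamma>) * (w \<bullet> w)) 1)" for w
  proof -
    define t where "t = (1/\<gamma>) * (w \<bullet> w)"
    have t0: "t \<ge> 0" unfolding t_def using g by simp
    have pos: "(1 + t)^2 > 0" using t0 by simp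
    have "m \<le> qf ?A (vec3 w t 1) / (1 + t)^2" using mle[of w] by (simp add: obj_eq t_def)
    hence le: "m * (1 + t)^2 \<le> qf ?A (vec3 w t 1)" using pos by (simp add: pos_le_divide_eq)
    have "F (vec3 w t 1) = qf ?A (vec3 w t 1) - m * (1 + t)^2"
      using qf_comb[of ?A m ?B 0 ?C "vec3 w t 1"] by (simp add: F_def qf_matB add.commute)
    hence "0 \<le> F (vec3 w t 1)" using le by simp
    thus ?thesis by (simp only: t_def)
  qed
  have step2: "0 \<le> F (vec3 w a b)" if G0: "G (vec3 w a b) = 0" and b0: "b \<noteq> 0" for w a b
  proof -
    define w' where "w' = (1/b) *\<^sub>R w"
    have "w \<bullet> w = \<gamma> * (a * b)" using G0 g by (simp add: Gvec field_simps)
    hence t: "(1/\<gamma>) * (w' \<bullet> w') = a / b" using g b0 by (simp add: w'_def field_simps power2_eq_square)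
    have v: "vec3 w a b = b *\<^sub>R vec3 w' (a / b) 1" using b0 by (simp add: vec3_scale w'_def)
    have "F (vec3 w a b) = b^2 * F (vec3 w' (a / b) 1)" unfolding v F_def by (rule qf_scale)
    moreover have "0 \<le> F (vec3 w' (a / b) 1)" using step1[of w'] unfolding t .
    ultimately show ?thesis by simp
  qed
  define e :: "real^'n" where "e = axis undefined 1"
  have ee: "e \<bullet> e = 1" by (simp add: e_def inner_axis_axis)
  define h where "h = (\<lambda>s::real. (norm (s *\<^sub>R (X *v e) + 1 *\<^sub>R (z - y) - (s^2 / \<gamma>) *\<^sub>R y))^2 - m * (1 + s^2 / \<gamma>)^2)"
  have hF: "h s = F (vec3 (s *\<^sub>R e) 1 (s^2/\<gamma>))" for s
    by (simp add: h_def Fvec matrix_vector_mult_scaleR)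
  have hpos: "0 \<le> h s" if "s \<noteq> 0" for s
  proof -
    have "G (vec3 (s *\<^sub>R e) 1 (s^2/\<gamma>)) = 0" by (simp add: Gvec ee power2_eq_square)
    moreover have "s^2/\<gamma> \<noteq> 0" using that g by simp
    ultimately show ?thesis unfolding hF by (rule step2)
  qed
  have "isCont h 0" unfolding h_def using g by (intro continuous_intros) auto
  hence lim: "(h \<longlongrightarrow> h 0) (at 0)" by (simp add: isCont_def)
  have ev: "eventually (\<lambda>s. 0 \<le> h s) (at (0::real))"
    unfolding eventually_at by (rule exI[of _ 1]) (auto intro: hpos)
  have h0: "0 \<le> h 0" by (rule tendsto_lowerbound[OF lim ev]) simp
  have step3: "0 \<le> F (vec3 0 a 0)" for a
  proof -
    have "vec3 (0::real^'n) a 0 = a *\<^sub>R vec3 0 1 0" by (simp add: vec3_scale)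
    hence "F (vec3 0 a 0) = a^2 * F (vec3 0 1 0)" unfolding F_def by (simp add: qf_scale)
    moreover have "F (vec3 0 1 0) = h 0" by (simp add: hF)
    ultimately show ?thesis using h0 by simp
  qed
  have zero: "0 \<le> F v" if "G v = 0" for v
  proof -
    obtain w a b where v: "v = vec3 w a b" using vec3_decomp by blast
    show ?thesis
    proof (cases "b = 0")
      case False thus ?thesis using step2 that v by blast
    next
      case True
      hence "w \<bullet> w = 0" using that g by (simp add: v Gvec)
      hence "w = 0" by simp
      thus ?thesis using step3 v True by simp
    qed
  qed
  have "\<exists>l. \<forall>v. 0 \<le> F v + l * G v"
  proof (rule S_lemma)
    show "quadf F" unfolding F_def by (rule quadf_qf)
    show "quadf G" unfolding G_def by (rule quadf_qf)
    show "G (vec3 e 0 0) > 0" using g by (simp add: Gvec ee)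
    show "G (vec3 0 1 1) < 0" by (simp add: Gvec)
  qed (rule zero)
  then obtain l where l: "\<And>v. 0 \<le> F v + l * G v" by blast
  have "psd (?A - m *\<^sub>R ?B + l *\<^sub>R ?C)"
    unfolding psd_def
  proof
    show "transpose (?A - m *\<^sub>R ?B + l *\<^sub>R ?C) = ?A - m *\<^sub>R ?B + l *\<^sub>R ?C"
      by (rule sym_comb[OF sym_matA sym_matB sym_matC])
    show "\<forall>x. 0 \<le> x \<bullet> ((?A - m *\<^sub>R ?B + l *\<^sub>R ?C) *v x)"
    proof
      fix x
      have "qf (?A - m *\<^sub>R ?B + l *\<^sub>R ?C) x = F x + l * G x"
        using qf_comb[of ?A m ?B l ?C x] qf_comb[of ?A m ?B 0 ?C x] by (simp add: F_def G_def)
      thus "0 \<le> x \<bullet> ((?A - m *\<^sub>R ?B + l *\<^sub>R ?C) *v x)" using l[of x] by (simp add: qf_def)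
    qed
  qed
  hence mfeas: "m \<in> {\<mu>. \<exists>l. psd (?A - \<mu> *\<^sub>R ?B + l *\<^sub>R ?C)}" by blast
  have INFm: "(INF w. ereal (?obj w)) = ereal m"
    unfolding m_def by (subst ereal_Inf'[OF bdd]) (auto simp: image_comp)
  show ?thesis
  proof (rule antisym)
    show "(INF w. ereal (?obj w)) \<le> (SUP \<mu> \<in> {\<mu>. \<exists>l. psd (?A - \<mu> *\<^sub>R ?B + l *\<^sub>R ?C)}. ereal \<mu>)"
      unfolding INFm by (rule SUP_upper[OF mfeas])
    show "(SUP \<mu> \<in> {\<mu>. \<exists>l. psd (?A - \<mu> *\<^sub>R ?B + l *\<^sub>R ?C)}. ereal \<mu>) \<le> (INF w. ereal (?obj w))"
      by (rule SUP_least, rule INF_greatest) (auto intro: weak_dual[OF g])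
  qed
qed
end
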